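(* Let $X\subseteq Y$ with $|Y\setminus X|\ge|X|$. Then $\tau_{pp}$ is the only Hausdorff topology $\tau$ on $I(X)$ making $I(X)$ a topological inverse semigroup for which the map $\pi:S_\infty(Y)\to(I(X),\tau)$, $\pi(f)=\widehat f$, is continuous (with $S_\infty(Y)$ carrying the pointwise convergence topology, $Y$ discrete).
   Context: $S_\infty(Y)$ is the group of all bijections $Y\to Y$. $I(X)$ is the set of all bijections $f:A\to B$ with $A,B\subseteq X$ (including the empty map), $\mathrm{dom}(f)=A$, $\mathrm{im}(f)=B$, with composition $\mathrm{dom}(f\circ g)=g^{-1}(\mathrm{dom}(f)\cap\mathrm{im}(g))$ and inversion $f\mapsto f^{-1}$. For $f\in S_\infty(Y)$, $\widehat f$ is the restriction of $f$ to $X\cap f^{-1}(X)$. For $x,y\in X$: $v(x,y)=\{f: x\in\mathrm{dom}(f), f(x)=y\}$, $w_1(x)=\{f: x\notin\mathrm{dom}(f)\}$, $w_2(y)=\{f: y\notin\mathrm{im}(f)\}$; $\tau_{pp}$ is the topology generated by all these sets. A topological inverse semigroup has continuous multiplication and inversion. *)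

theory Defs
  imports "HOL-Analysis.Analysis"
begin

text \<open>Partial bijections on X are modelled as partial maps 'a \<Rightarrow> 'a option.\<close>

definition IX :: "'a set \<Rightarrow> ('a \<Rightarrow> 'a option) set" where
  "IX X = {f. dom f \<subseteq> X \<and> ran f \<subseteq> X \<and> inj_on f (dom f)}"

text \<open>Composition f \<circ> g (first g, then f) is map composition (map_comp);
  its domain is g^{-1}(dom f \<inter> im g).\<close>
definition pmult :: "('a \<Rightarrow> 'a option) \<Rightarrow> ('a \<Rightarrow> 'a option) \<Rightarrow> ('a \<Rightarrow> 'a option)" where
  "pmult f g = f \<circ>\<^sub>m g"

definition pinv :: "('a \<Rightarrow> 'a option) \<Rightarrow> ('a \<Rightarrow> 'a option)" where
  "pinv f = (\<lambda>y. if y \<in> ran f then Some (THE x. f x = Some y) else None)"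

definition vset :: "'a set \<Rightarrow> 'a \<Rightarrow> 'a \<Rightarrow> ('a \<Rightarrow> 'a option) set" where
  "vset X x y = {f \<in> IX X. f x = Some y}"

definition w1set :: "'a set \<Rightarrow> 'a \<Rightarrow> ('a \<Rightarrow> 'a option) set" where
  "w1set X x = {f \<in> IX X. x \<notin> dom f}"

definition w2set :: "'a set \<Rightarrow> 'a \<Rightarrow> ('a \<Rightarrow> 'a option) set" where
  "w2set X y = {f \<in> IX X. y \<notin> ran f}"

text \<open>tau_pp: generated by the subbasis; the whole space I(X) is included
  so that the carrier is I(X) also in the degenerate case X = {}.\<close>
definition tau_pp :: "'a set \<Rightarrow> ('a \<Rightarrow> 'a option) topology" where
  "tau_pp X = topology_generated_by
     (insert (IX X)
       ({vset X x y | x y. x \<in> X \<and> y \<in> X} \<union> {w1set X x | x. x \<in> X} \<union> {w2set X y | y. y \<in> X}))"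

definition Sinf :: "'a set \<Rightarrow> ('a \<Rightarrow> 'a) set" where
  "Sinf Y = {f \<in> extensional Y. bij_betw f Y Y}"

definition Sinf_top :: "'a set \<Rightarrow> ('a \<Rightarrow> 'a) topology" where
  "Sinf_top Y = subtopology (product_topology (\<lambda>_. discrete_topology Y) Y) (Sinf Y)"

definition hat :: "'a set \<Rightarrow> ('a \<Rightarrow> 'a) \<Rightarrow> ('a \<Rightarrow> 'a option)" where
  "hat X f = (\<lambda>x. if x \<in> X \<and> f x \<in> X then Some (f x) else None)"

definition top_inverse_semigroup_IX :: "'a set \<Rightarrow> ('a \<Rightarrow> 'a option) topology \<Rightarrow> bool" where
  "top_inverse_semigroup_IX X T \<longleftrightarrow>
     topspace T = IX X \<and>
     continuous_map (prod_topology T T) T (\<lambda>(f, g). pmult f g) \<and>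
     continuous_map T T pinv"

end

theory Submission
  imports Defs
begin


abbreviation SB :: "'a set \<Rightarrow> ('a \<Rightarrow> 'a option) set set" where
  "SB X \<equiv> insert (IX X)
       ({vset X x y | x y. x \<in> X \<and> y \<in> X} \<union> {w1set X x | x. x \<in> X} \<union> {w2set X y | y. y \<in> X})"

lemma topspace_tau: "topspace (tau_pp X) = IX X"
  unfolding tau_pp_def topology_generated_by_topspace
  by (auto simp: vset_def w1set_def w2set_def)

lemma open_v: "x \<in> X \<Longrightarrow> y \<in> X \<Longrightarrow> openin (tau_pp X) (vset X x y)"
  unfolding tau_pp_def by (rule topology_generated_by_Basis) blast
lemma open_w1: "x \<in> X \<Longrightarrow> openin (tau_pp X) (w1set X x)"
  unfolding tau_pp_def by (rule topology_generated_by_Basis) blast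
lemma open_w2: "x \<in> X \<Longrightarrow> openin (tau_pp X) (w2set X x)"
  unfolding tau_pp_def by (rule topology_generated_by_Basis) blast

lemma cont_into_tau:
  assumes "\<And>a. a \<in> topspace A \<Longrightarrow> g a \<in> IX X"
    and "\<And>x y. x \<in> X \<Longrightarrow> y \<in> X \<Longrightarrow> openin A {a \<in> topspace A. g a x = Some y}"
    and "\<And>x. x \<in> X \<Longrightarrow> openin A {a \<in> topspace A. g a x = None}"
    and "\<And>y. y \<in> X \<Longrightarrow> openin A {a \<in> topspace A. y \<notin> ran (g a)}"
  shows "continuous_map A (tau_pp X) g"
  unfolding tau_pp_def
proof (rule continuous_on_generated_topo)
  fix U assume "U \<in> SB X"
  then consider "U = IX X" | x y where "x \<in> X" "y \<in> X" "U = vset X x y"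
    | x where "x \<in> X" "U = w1set X x" | x where "x \<in> X" "U = w2set X x" by blast
  then show "openin A (g -` U \<inter> topspace A)"
  proof cases
    case 1
    then have "g -` U \<inter> topspace A = topspace A" using assms(1) by auto
    then show ?thesis by simp
  next
    case (2 x y)
    then have "g -` U \<inter> topspace A = {a \<in> topspace A. g a x = Some y}" using assms(1)
      by (auto simp: vset_def)
    then show ?thesis using assms(2) 2 by simp
  next
    case (3 x)
    then have "g -` U \<inter> topspace A = {a \<in> topspace A. g a x = None}" using assms(1)
      by (auto simp: w1set_def)
    then show ?thesis using assms(3) 3 by simp
  next
    case (4 x)
    then have "g -` U \<inter> topspace A = {a \<in> topspace A. x \<notin> ran (g a)}" using assms(1)
      by (auto simp: w2set_def)
    then show ?thesis using assms(4) 4 by simp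
  qed
next
  show "g ` topspace A \<subseteq> \<Union> (SB X)" using assms(1) by auto
qed

lemma IX_dom: "f \<in> IX X \<Longrightarrow> f x = Some y \<Longrightarrow> x \<in> X"
  unfolding IX_def by auto
lemma IX_ran: "f \<in> IX X \<Longrightarrow> f x = Some y \<Longrightarrow> y \<in> X"
  unfolding IX_def by (auto simp: ran_def)
lemma IX_inj: assumes "f \<in> IX X" "f x = Some y" "f x' = Some y" shows "x = x'"
proof -
  have inj: "inj_on f (dom f)" using assms(1) by (simp add: IX_def)
  show ?thesis by (rule inj_onD[OF inj]) (use assms in auto)
qed
lemma IX_I: "(\<And>x y. f x = Some y \<Longrightarrow> x \<in> X \<and> y \<in> X) \<Longrightarrow>
   (\<And>x x' y. f x = Some y \<Longrightarrow> f x' = Some y \<Longrightarrow> x = x') \<Longrightarrow> f \<in> IX X"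
  unfolding IX_def inj_on_def dom_def ran_def by auto

lemma pinv_Some: "f \<in> IX X \<Longrightarrow> pinv f y = Some x \<longleftrightarrow> f x = Some y"
proof
  assume f: "f \<in> IX X" and p: "pinv f y = Some x"
  then have "y \<in> ran f" unfolding pinv_def by (auto split: if_splits)
  then obtain z where z: "f z = Some y" by (auto simp: ran_def)
  then have "(THE x. f x = Some y) = z" using IX_inj[OF f] by blast
  then show "f x = Some y" using p z unfolding pinv_def by (auto split: if_splits)
next
  assume f: "f \<in> IX X" and z: "f x = Some y"
  then have "(THE x. f x = Some y) = x" using IX_inj[OF f] by blast
  moreover have "y \<in> ran f" using z by (auto simp: ran_def)
  ultimately show "pinv f y = Some x" unfolding pinv_def by auto
qed

lemma pinv_None: "pinv f y = None \<longleftrightarrow> y \<notin> ran f"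
  unfolding pinv_def by auto

lemma pinv_IX: assumes f: "f \<in> IX X" shows "pinv f \<in> IX X"
proof (rule IX_I)
  fix x y assume "pinv f x = Some y"
  then have "f y = Some x" using pinv_Some[OF f] by simp
  then show "x \<in> X \<and> y \<in> X" using IX_dom[OF f] IX_ran[OF f] by simp
next
  fix x x' y assume "pinv f x = Some y" "pinv f x' = Some y"
  then have "f y = Some x" "f y = Some x'" using pinv_Some[OF f] by simp_all
  then show "x = x'" by simp
qed

lemma ran_pinv: "f \<in> IX X \<Longrightarrow> ran (pinv f) = dom f"
  using pinv_Some[of f X] by (auto simp: ran_def dom_def)

lemma pinv_pinv: "f \<in> IX X \<Longrightarrow> pinv (pinv f) = f"
proof
  fix x assume f: "f \<in> IX X"
  show "pinv (pinv f) x = f x"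
  proof (cases "f x")
    case None
    then have "x \<notin> ran (pinv f)" using ran_pinv[OF f] by auto
    then show ?thesis using None pinv_None by metis
  next
    case (Some y)
    then show ?thesis using pinv_Some[OF pinv_IX[OF f]] pinv_Some[OF f] by metis
  qed
qed

lemma pmult_IX: "f \<in> IX X \<Longrightarrow> g \<in> IX X \<Longrightarrow> pmult f g \<in> IX X"
  apply (rule IX_I)
  unfolding pmult_def map_comp_def
  by (auto split: option.splits dest: IX_dom IX_ran IX_inj)

lemma openTimes: "openin (tau_pp X) A \<Longrightarrow> openin (tau_pp X) B \<Longrightarrow> openin (prod_topology (tau_pp X) (tau_pp X)) (A \<times> B)"
  by (simp add: openin_prod_Times_iff)

lemma open_IX: "openin (tau_pp X) (IX X)"
  by (metis openin_topspace topspace_tau)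

lemma pmult_Some: "pmult f g x = Some z \<longleftrightarrow> (\<exists>y. g x = Some y \<and> f y = Some z)"
  unfolding pmult_def map_comp_def by (auto split: option.splits)

lemma pmult_None: "pmult f g x = None \<longleftrightarrow> (g x = None \<or> (\<exists>y. g x = Some y \<and> f y = None))"
  unfolding pmult_def map_comp_def by (auto split: option.splits)

lemma mS: assumes f: "f \<in> IX X" and g: "g \<in> IX X"
  shows "pmult f g x = Some z \<longleftrightarrow> (\<exists>y\<in>X. f \<in> vset X y z \<and> g \<in> vset X x y)"
  unfolding vset_def pmult_Some using f g by (auto dest: IX_ran[OF g])

lemma mN: assumes f: "f \<in> IX X" and g: "g \<in> IX X"
  shows "pmult f g x = None \<longleftrightarrow> g \<in> w1set X x \<or> (\<exists>y\<in>X. f \<in> w1set X y \<and> g \<in> vset X x y)"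
  unfolding vset_def w1set_def pmult_None using f g by (auto dest: IX_ran[OF g])

lemma mR: "f \<in> IX X \<Longrightarrow> g \<in> IX X \<Longrightarrow> z \<notin> ran (pmult f g) \<longleftrightarrow> f \<in> w2set X z \<or> (\<exists>y\<in>X. f \<in> vset X y z \<and> g \<in> w2set X y)"
proof -
  assume f: "f \<in> IX X" and g: "g \<in> IX X"
  have "z \<in> ran (pmult f g) \<longleftrightarrow> (\<exists>x y. g x = Some y \<and> f y = Some z)"
    unfolding ran_def pmult_Some by auto
  also have "\<dots> \<longleftrightarrow> (\<exists>y. y \<in> ran g \<and> f y = Some z)" unfolding ran_def by auto
  finally have e: "z \<in> ran (pmult f g) \<longleftrightarrow> (\<exists>y. y \<in> ran g \<and> f y = Some z)" .
  show ?thesis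
  proof
    assume n: "z \<notin> ran (pmult f g)"
    show "f \<in> w2set X z \<or> (\<exists>y\<in>X. f \<in> vset X y z \<and> g \<in> w2set X y)"
    proof (cases "z \<in> ran f")
      case False then show ?thesis using f by (simp add: w2set_def)
    next
      case True
      then obtain y where y: "f y = Some z" by (auto simp: ran_def)
      have "y \<in> X" using IX_dom[OF f y] .
      moreover have "y \<notin> ran g" using n e y by blast
      ultimately show ?thesis using f g y by (auto simp: vset_def w2set_def)
    qed
  next
    assume d: "f \<in> w2set X z \<or> (\<exists>y\<in>X. f \<in> vset X y z \<and> g \<in> w2set X y)"
    show "z \<notin> ran (pmult f g)"
    proof
      assume "z \<in> ran (pmult f g)"
      then obtain y where y: "y \<in> ran g" "f y = Some z" using e by blast
      from d show False
      proof
        assume "f \<in> w2set X z" then show False using y by (auto simp: w2set_def ran_def)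
      next
        assume "\<exists>y\<in>X. f \<in> vset X y z \<and> g \<in> w2set X y"
        then obtain y' where "f y' = Some z" "y' \<notin> ran g" by (auto simp: vset_def w2set_def)
        then show False using y IX_inj[OF f, of y z y'] by auto
      qed
    qed
  qed
qed

lemma cont_mult: "continuous_map (prod_topology (tau_pp X) (tau_pp X)) (tau_pp X) (\<lambda>(f,g). pmult f g)"
proof (rule cont_into_tau)
  let ?P = "prod_topology (tau_pp X) (tau_pp X)"
  have tp: "topspace ?P = IX X \<times> IX X" by (simp add: topspace_tau)
  show "\<And>a. a \<in> topspace ?P \<Longrightarrow> (case a of (f, g) \<Rightarrow> pmult f g) \<in> IX X"
    using tp pmult_IX by auto
  fix x assume x: "x \<in> X"
  {
    fix z assume z: "z \<in> X"
    have "{a \<in> topspace ?P. (case a of (f, g) \<Rightarrow> pmult f g) x = Some z} = (IX X \<times> IX X) \<inter> (\<Union>y\<in>X. vset X y z \<times> vset X x y)"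
      unfolding tp by (auto simp: mS)
    moreover have "openin ?P ((IX X \<times> IX X) \<inter> (\<Union>y\<in>X. vset X y z \<times> vset X x y))"
      using x z by (intro openin_Int openin_Union) (auto intro!: openTimes open_v open_IX)
    ultimately show "openin ?P {a \<in> topspace ?P. (case a of (f, g) \<Rightarrow> pmult f g) x = Some z}" by simp
  }
  have "{a \<in> topspace ?P. (case a of (f, g) \<Rightarrow> pmult f g) x = None} = (IX X \<times> IX X) \<inter> (
       (IX X \<times> w1set X x) \<union> (\<Union>y\<in>X. w1set X y \<times> vset X x y))"
    unfolding tp by (auto simp: mN)
  moreover have "openin ?P ((IX X \<times> IX X) \<inter> ((IX X \<times> w1set X x) \<union> (\<Union>y\<in>X. w1set X y \<times> vset X x y)))"
    using x by (intro openin_Int openin_Union openin_Un) (auto intro!: openTimes open_v open_w1 open_IX)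
  ultimately show "openin ?P {a \<in> topspace ?P. (case a of (f, g) \<Rightarrow> pmult f g) x = None}" by simp
  have "{a \<in> topspace ?P. x \<notin> ran ((case a of (f, g) \<Rightarrow> pmult f g))} = (IX X \<times> IX X) \<inter> (
       (w2set X x \<times> IX X) \<union> (\<Union>y\<in>X. vset X y x \<times> w2set X y))"
    unfolding tp by (auto simp: mR) (metis mR)+
  moreover have "openin ?P ((IX X \<times> IX X) \<inter> ((w2set X x \<times> IX X) \<union> (\<Union>y\<in>X. vset X y x \<times> w2set X y)))"
    using x by (intro openin_Int openin_Union openin_Un) (auto intro!: openTimes open_v open_w2 open_IX)
  ultimately show "openin ?P {a \<in> topspace ?P. x \<notin> ran ((case a of (f, g) \<Rightarrow> pmult f g))}" by simp
qed

lemma cont_pinv: "continuous_map (tau_pp X) (tau_pp X) pinv"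
proof (rule cont_into_tau)
  show "\<And>a. a \<in> topspace (tau_pp X) \<Longrightarrow> pinv a \<in> IX X"
    by (simp add: topspace_tau pinv_IX)
  fix x assume x: "x \<in> X"
  {
    fix z assume z: "z \<in> X"
    have "{a \<in> topspace (tau_pp X). pinv a x = Some z} = vset X z x"
      unfolding topspace_tau vset_def by (auto simp: pinv_Some)
    then show "openin (tau_pp X) {a \<in> topspace (tau_pp X). pinv a x = Some z}"
      using open_v x z by simp
  }
  have "{a \<in> topspace (tau_pp X). pinv a x = None} = w2set X x"
    unfolding topspace_tau w2set_def by (simp add: pinv_None)
  then show "openin (tau_pp X) {a \<in> topspace (tau_pp X). pinv a x = None}"
    using open_w2 x by simp
  have "{a \<in> topspace (tau_pp X). x \<notin> ran (pinv a)} = w1set X x"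
    unfolding topspace_tau w1set_def by (auto simp: ran_pinv)
  then show "openin (tau_pp X) {a \<in> topspace (tau_pp X). x \<notin> ran (pinv a)}"
    using open_w1 x by simp
qed

lemma haus_tau: "Hausdorff_space (tau_pp X)"
  unfolding Hausdorff_space_def topspace_tau
proof (intro allI impI, elim conjE)
  fix f g assume f: "f \<in> IX X" and g: "g \<in> IX X" and ne: "f \<noteq> g"
  then obtain a where a: "f a \<noteq> g a" by (meson ext)
  show "\<exists>U V. openin (tau_pp X) U \<and> openin (tau_pp X) V \<and> f \<in> U \<and> g \<in> V \<and> disjnt U V"
  proof (cases "f a")
    case None
    then obtain c where c: "g a = Some c" using a by (metis option.exhaust)
    show ?thesis
      apply (rule exI[of _ "w1set X a"], rule exI[of _ "vset X a c"])
      using None c f g IX_dom[OF g c] IX_ran[OF g c] open_w1[of a X] open_v[of a X c]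
      by (auto simp: w1set_def vset_def disjnt_def)
  next
    case (Some b)
    show ?thesis
    proof (cases "g a")
      case None
      show ?thesis
        apply (rule exI[of _ "vset X a b"], rule exI[of _ "w1set X a"])
        using None Some f g IX_dom[OF f Some] IX_ran[OF f Some] open_w1[of a X] open_v[of a X b]
        by (auto simp: w1set_def vset_def disjnt_def)
    next
      case (Some c)
      show ?thesis
        apply (rule exI[of _ "vset X a b"], rule exI[of _ "vset X a c"])
        using \<open>f a = Some b\<close> Some a f g IX_dom[OF f \<open>f a = Some b\<close>] IX_ran[OF f \<open>f a = Some b\<close>] IX_ran[OF g Some] open_v[of a X b] open_v[of a X c]
        by (auto simp: vset_def disjnt_def)
    qed
  qed
qed



lemma Sinf_bij: "f \<in> Sinf Y \<Longrightarrow> bij_betw f Y Y" by (simp add: Sinf_def)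

lemma Sinf_in: "f \<in> Sinf Y \<Longrightarrow> a \<in> Y \<Longrightarrow> f a \<in> Y"
  unfolding Sinf_def bij_betw_def by auto

lemma topspace_Sinf: "topspace (Sinf_top Y) = Sinf Y"
proof -
  have "Sinf Y \<subseteq> (\<Pi>\<^sub>E i\<in>Y. Y)"
    unfolding Sinf_def by (auto simp: PiE_def Pi_def bij_betw_def)
  then show ?thesis unfolding Sinf_top_def by auto
qed

lemma open_Sinf_coord:
  assumes a: "a \<in> Y" and B: "B \<subseteq> Y"
  shows "openin (Sinf_top Y) {f \<in> Sinf Y. f a \<in> B}"
proof -
  let ?P = "product_topology (\<lambda>_. discrete_topology Y) Y"
  have "openin ?P {f \<in> topspace ?P. f a \<in> B}"
    by (rule openin_continuous_map_preimage[OF continuous_map_product_projection[OF a]]) (simp add: B)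
  moreover have "{f \<in> Sinf Y. f a \<in> B} = {f \<in> topspace ?P. f a \<in> B} \<inter> Sinf Y"
    using topspace_Sinf[of Y] unfolding Sinf_top_def by auto
  ultimately show ?thesis unfolding Sinf_top_def openin_subtopology by blast
qed

lemma hat_IX: assumes "X \<subseteq> Y" "f \<in> Sinf Y" shows "hat X f \<in> IX X"
proof (rule IX_I)
  fix x y assume "hat X f x = Some y" then show "x \<in> X \<and> y \<in> X"
    unfolding hat_def by (auto split: if_splits)
next
  fix x x' y assume h: "hat X f x = Some y" "hat X f x' = Some y"
  then have "x \<in> Y" "x' \<in> Y" "f x = f x'" using assms(1) unfolding hat_def by (auto split: if_splits)
  then show "x = x'" using Sinf_bij[OF assms(2)] by (auto simp: bij_betw_def inj_on_def)
qed

lemma cont_hat: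
  assumes XY: "X \<subseteq> Y"
  shows "continuous_map (Sinf_top Y) (tau_pp X) (hat X)"
proof (rule cont_into_tau)
  show "\<And>a. a \<in> topspace (Sinf_top Y) \<Longrightarrow> hat X a \<in> IX X"
    using hat_IX[OF XY] by (simp add: topspace_Sinf)
  fix x assume x: "x \<in> X"
  then have xY: "x \<in> Y" using XY by auto
  {
    fix y assume y: "y \<in> X"
    have "{a \<in> topspace (Sinf_top Y). hat X a x = Some y} = {f \<in> Sinf Y. f x \<in> {y}}"
      using x y unfolding topspace_Sinf hat_def by auto
    then show "openin (Sinf_top Y) {a \<in> topspace (Sinf_top Y). hat X a x = Some y}"
      using open_Sinf_coord[OF xY, of "{y}"] y XY by auto
  }
  have "{a \<in> topspace (Sinf_top Y). hat X a x = None} = {f \<in> Sinf Y. f x \<in> Y - X}"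
    using x xY unfolding topspace_Sinf hat_def by (auto dest: Sinf_in)
  then show "openin (Sinf_top Y) {a \<in> topspace (Sinf_top Y). hat X a x = None}"
    using open_Sinf_coord[OF xY, of "Y - X"] by auto
  have "{a \<in> topspace (Sinf_top Y). x \<notin> ran (hat X a)} = (\<Union>z\<in>Y - X. {f \<in> Sinf Y. f z \<in> {x}})"
  proof (intro set_eqI iffI)
    fix f assume "f \<in> {a \<in> topspace (Sinf_top Y). x \<notin> ran (hat X a)}"
    then have f: "f \<in> Sinf Y" and n: "x \<notin> ran (hat X f)" by (auto simp: topspace_Sinf)
    obtain z where z: "z \<in> Y" "f z = x" using Sinf_bij[OF f] xY by (metis bij_betw_imp_surj_on imageE)
    have "z \<notin> X"
    proof
      assume "z \<in> X"
      then have "hat X f z = Some x" using z x unfolding hat_def by auto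
      then show False using n by (auto simp: ran_def)
    qed
    then show "f \<in> (\<Union>z\<in>Y - X. {f \<in> Sinf Y. f z \<in> {x}})" using z f by auto
  next
    fix f assume "f \<in> (\<Union>z\<in>Y - X. {f \<in> Sinf Y. f z \<in> {x}})"
    then obtain z where z: "z \<in> Y" "z \<notin> X" "f z = x" and f: "f \<in> Sinf Y" by auto
    have "x \<notin> ran (hat X f)"
    proof
      assume "x \<in> ran (hat X f)"
      then obtain w where "hat X f w = Some x" by (auto simp: ran_def)
      then have w: "w \<in> X" "f w = x" unfolding hat_def by (auto split: if_splits)
      then have "w = z" using Sinf_bij[OF f] z XY by (auto simp: bij_betw_def inj_on_def)
      then show False using w z by auto
    qed
    then show "f \<in> {a \<in> topspace (Sinf_top Y). x \<notin> ran (hat X a)}" using f by (simp add: topspace_Sinf)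
  qed
  moreover have "openin (Sinf_top Y) (\<Union>z\<in>Y - X. {f \<in> Sinf Y. f z \<in> {x}})"
    using xY open_Sinf_coord[of _ Y "{x}"] by (intro openin_Union) auto
  ultimately show "openin (Sinf_top Y) {a \<in> topspace (Sinf_top Y). x \<notin> ran (hat X a)}" by simp
qed



definition eps :: "'a \<Rightarrow> 'a \<Rightarrow> 'a option" where
  "eps a = (\<lambda>z. if z = a then Some a else None)"

lemma eps_IX: "a \<in> X \<Longrightarrow> eps a \<in> IX X"
  by (rule IX_I) (auto simp: eps_def split: if_splits)

lemma empty_IX: "(\<lambda>_. None) \<in> IX X"
  by (rule IX_I) auto

lemma cmul:
  assumes T: "top_inverse_semigroup_IX X T"
    and p: "continuous_map A T p" and q: "continuous_map A T q"
  shows "continuous_map A T (\<lambda>a. pmult (p a) (q a))"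
proof -
  have m: "continuous_map (prod_topology T T) T (\<lambda>(f, g). pmult f g)"
    using T by (simp add: top_inverse_semigroup_IX_def)
  have "continuous_map A T ((\<lambda>(f, g). pmult f g) \<circ> (\<lambda>a. (p a, q a)))"
    by (rule continuous_map_compose[OF continuous_map_pairedI[OF p q] m])
  then show ?thesis by (simp add: o_def)
qed

lemma cinv:
  assumes T: "top_inverse_semigroup_IX X T" and p: "continuous_map A T p"
  shows "continuous_map A T (\<lambda>a. pinv (p a))"
proof -
  have "continuous_map T T pinv" using T by (simp add: top_inverse_semigroup_IX_def)
  from continuous_map_compose[OF p this] show ?thesis by (simp add: o_def)
qed

lemma open_neq:
  assumes H: "Hausdorff_space T" and phi: "continuous_map T T \<phi>" and c: "c \<in> topspace T"
  shows "openin T {f \<in> topspace T. \<phi> f \<noteq> c}"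
proof -
  have t1: "t1_space T" by (rule Hausdorff_imp_t1_space[OF H])
  have "closedin T {c}" using t1 c by (simp add: t1_space_closedin_singleton)
  then have "openin T (topspace T - {c})" by (simp add: openin_diff)
  from openin_continuous_map_preimage[OF phi this]
  have o: "openin T {x \<in> topspace T. \<phi> x \<in> topspace T - {c}}" .
  have "{x \<in> topspace T. \<phi> x \<in> topspace T - {c}} = {f \<in> topspace T. \<phi> f \<noteq> c}"
    using continuous_map_image_subset_topspace[OF phi] by auto
  then show ?thesis using o by simp
qed

lemma comp1: "f \<in> IX X \<Longrightarrow> pmult (eps y) (pmult f (eps x)) = (\<lambda>_. None) \<longleftrightarrow> f x \<noteq> Some y"
proof
  assume "pmult (eps y) (pmult f (eps x)) = (\<lambda>_. None)"
  then have "pmult (eps y) (pmult f (eps x)) x = None" by simp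
  then show "f x \<noteq> Some y" by (auto simp: pmult_def eps_def map_comp_def split: option.splits if_splits)
next
  assume "f x \<noteq> Some y"
  then show "pmult (eps y) (pmult f (eps x)) = (\<lambda>_. None)"
    by (auto simp: pmult_def eps_def map_comp_def split: option.splits if_splits)
qed

lemma comp2: assumes f: "f \<in> IX X"
  shows "pmult (pmult (pinv f) f) (eps x) = eps x \<longleftrightarrow> f x \<noteq> None"
proof
  assume "pmult (pmult (pinv f) f) (eps x) = eps x"
  then have "pmult (pmult (pinv f) f) (eps x) x = Some x" by (simp add: eps_def)
  then show "f x \<noteq> None" by (auto simp: pmult_def eps_def map_comp_def split: option.splits if_splits)
next
  assume "f x \<noteq> None"
  then obtain y where y: "f x = Some y" by auto
  then have "pinv f y = Some x" using pinv_Some[OF f] by simp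
  then show "pmult (pmult (pinv f) f) (eps x) = eps x"
    using y by (auto simp: pmult_def eps_def map_comp_def)
qed

lemma comp3: assumes f: "f \<in> IX X"
  shows "pmult (eps y) (pmult f (pinv f)) = eps y \<longleftrightarrow> y \<in> ran f"
proof
  assume "pmult (eps y) (pmult f (pinv f)) = eps y"
  then have "pmult (eps y) (pmult f (pinv f)) y = Some y" by (simp add: eps_def)
  then obtain x where "pinv f y = Some x" "f x = Some y"
    by (auto simp: pmult_def eps_def map_comp_def split: option.splits if_splits)
  then show "y \<in> ran f" by (auto simp: ran_def)
next
  assume "y \<in> ran f"
  then obtain x where x: "f x = Some y" by (auto simp: ran_def)
  then have px: "pinv f y = Some x" using pinv_Some[OF f] by simp
  show "pmult (eps y) (pmult f (pinv f)) = eps y"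
  proof
    fix z show "pmult (eps y) (pmult f (pinv f)) z = eps y z"
    proof (cases "pinv f z")
      case None then show ?thesis using px by (auto simp: pmult_def eps_def map_comp_def)
    next
      case (Some w)
      then have "f w = Some z" using pinv_Some[OF f] by simp
      then show ?thesis using Some by (auto simp: pmult_def eps_def map_comp_def)
    qed
  qed
qed

lemma tau_le_T:
  assumes H: "Hausdorff_space T" and T: "top_inverse_semigroup_IX X T"
  shows "continuous_map T (tau_pp X) (\<lambda>f. f)"
proof (rule cont_into_tau)
  have ts: "topspace T = IX X" using T by (simp add: top_inverse_semigroup_IX_def)
  have id: "continuous_map T T (\<lambda>f. f)" by simp
  show "\<And>a. a \<in> topspace T \<Longrightarrow> a \<in> IX X" using ts by simp
  fix x assume x: "x \<in> X"
  have ex: "continuous_map T T (\<lambda>f. eps x)" using eps_IX[OF x] ts by simp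
  {
    fix y assume y: "y \<in> X"
    have ey: "continuous_map T T (\<lambda>f. eps y)" using eps_IX[OF y] ts by simp
    have c: "continuous_map T T (\<lambda>f. pmult (eps y) (pmult f (eps x)))"
      by (rule cmul[OF T ey cmul[OF T id ex]])
    have "openin T {f \<in> topspace T. pmult (eps y) (pmult f (eps x)) \<noteq> (\<lambda>_. None)}"
      by (rule open_neq[OF H c]) (simp add: ts empty_IX)
    moreover have "{f \<in> topspace T. pmult (eps y) (pmult f (eps x)) \<noteq> (\<lambda>_. None)} = {a \<in> topspace T. a x = Some y}"
      using ts by (auto simp: comp1)
    ultimately show "openin T {a \<in> topspace T. a x = Some y}" by simp
  }
  have c: "continuous_map T T (\<lambda>f. pmult (pmult (pinv f) f) (eps x))"
    by (rule cmul[OF T cmul[OF T cinv[OF T id] id] ex])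
  have "openin T {f \<in> topspace T. pmult (pmult (pinv f) f) (eps x) \<noteq> eps x}"
    by (rule open_neq[OF H c]) (simp add: ts eps_IX x)
  moreover have "{f \<in> topspace T. pmult (pmult (pinv f) f) (eps x) \<noteq> eps x} = {a \<in> topspace T. a x = None}"
    using ts by (auto simp: comp2)
  ultimately show "openin T {a \<in> topspace T. a x = None}" by simp
  have c: "continuous_map T T (\<lambda>f. pmult (eps x) (pmult f (pinv f)))"
    by (rule cmul[OF T ex cmul[OF T id cinv[OF T id]]])
  have "openin T {f \<in> topspace T. pmult (eps x) (pmult f (pinv f)) \<noteq> eps x}"
    by (rule open_neq[OF H c]) (simp add: ts eps_IX x)
  moreover have "{f \<in> topspace T. pmult (eps x) (pmult f (pinv f)) \<noteq> eps x} = {a \<in> topspace T. x \<notin> ran a}"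
    using ts by (auto simp: comp3)
  ultimately show "openin T {a \<in> topspace T. x \<notin> ran a}" by simp
qed



definition rho :: "('a \<Rightarrow> 'a) \<Rightarrow> 'a set \<Rightarrow> 'a set \<Rightarrow> ('a \<Rightarrow> 'a option) \<Rightarrow> 'a \<Rightarrow> 'a" where
  "rho k X Y h a = (if a \<in> X then (case h a of Some b \<Rightarrow> b | None \<Rightarrow> k a)
     else if a \<in> k ` X then (case pinv h (inv_into X k a) of Some x \<Rightarrow> k x | None \<Rightarrow> inv_into X k a)
     else if a \<in> Y then a else undefined)"

locale kset =
  fixes k :: "'a \<Rightarrow> 'a" and X Y :: "'a set"
  assumes XY: "X \<subseteq> Y" and kinj: "inj_on k X" and kX: "k ` X \<subseteq> Y - X"
begin

lemma k_notX: "x \<in> X \<Longrightarrow> k x \<notin> X" using kX by auto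
lemma k_Y: "x \<in> X \<Longrightarrow> k x \<in> Y" using kX by auto
lemma inv_k: "x \<in> X \<Longrightarrow> inv_into X k (k x) = x" using kinj by simp

lemma rho_X_Some: "a \<in> X \<Longrightarrow> h a = Some b \<Longrightarrow> rho k X Y h a = b"
  by (simp add: rho_def)
lemma rho_X_None: "a \<in> X \<Longrightarrow> h a = None \<Longrightarrow> rho k X Y h a = k a"
  by (simp add: rho_def)
lemma rho_k_Some: "y \<in> X \<Longrightarrow> pinv h y = Some x \<Longrightarrow> rho k X Y h (k y) = k x"
  using k_notX inv_k by (simp add: rho_def)
lemma rho_k_None: "y \<in> X \<Longrightarrow> pinv h y = None \<Longrightarrow> rho k X Y h (k y) = y"
  using k_notX inv_k by (simp add: rho_def)
lemma rho_other: "a \<notin> X \<Longrightarrow> a \<notin> k ` X \<Longrightarrow> rho k X Y h a = (if a \<in> Y then a else undefined)"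
  by (simp add: rho_def)

lemma rho_Y: assumes h: "h \<in> IX X" and a: "a \<in> Y" shows "rho k X Y h a \<in> Y"
proof (cases "a \<in> X")
  case True
  then show ?thesis
  proof (cases "h a")
    case None then show ?thesis using True rho_X_None k_Y by simp
  next
    case (Some b) then show ?thesis using True rho_X_Some IX_ran[OF h Some] XY by auto
  qed
next
  case False
  show ?thesis
  proof (cases "a \<in> k ` X")
    case True
    then obtain y where y: "y \<in> X" "a = k y" by auto
    show ?thesis
    proof (cases "pinv h y")
      case None then show ?thesis using y rho_k_None XY by auto
    next
      case (Some x)
      have "x \<in> X" by (rule IX_ran[OF pinv_IX[OF h] Some])
      then show ?thesis using y Some rho_k_Some k_Y by auto
    qed
  next
    case False2: False
    then show ?thesis using False a rho_other by simp
  qed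
qed

lemma rho_inv: assumes h: "h \<in> IX X" and a: "a \<in> Y" shows "rho k X Y (pinv h) (rho k X Y h a) = a"
proof (cases "a \<in> X")
  case True
  then show ?thesis
  proof (cases "h a")
    case None
    have "pinv (pinv h) a = None" using None pinv_pinv[OF h] by simp
    then show ?thesis using True None rho_X_None rho_k_None by simp
  next
    case (Some b)
    have b: "b \<in> X" using IX_ran[OF h Some] .
    have "pinv h b = Some a" using pinv_Some[OF h] Some by simp
    then show ?thesis using True Some rho_X_Some b by simp
  qed
next
  case False
  show ?thesis
  proof (cases "a \<in> k ` X")
    case True
    then obtain y where y: "y \<in> X" "a = k y" by auto
    show ?thesis
    proof (cases "pinv h y")
      case None then show ?thesis using y rho_k_None rho_X_None by simp
    next
      case (Some x)
      have x: "x \<in> X" using IX_ran[OF pinv_IX[OF h] Some] .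
      have "pinv (pinv h) x = Some y" using pinv_Some[OF pinv_IX[OF h]] Some by simp
      then show ?thesis using y Some rho_k_Some x by simp
    qed
  next
    case False2: False
    then show ?thesis using False a rho_other by simp
  qed
qed

lemma rho_ext: "rho k X Y h \<in> extensional Y"
  unfolding extensional_def
proof (safe)
  fix x assume "x \<notin> Y"
  then have "x \<notin> X" "x \<notin> k ` X" using XY kX by auto
  then show "rho k X Y h x = undefined" using \<open>x \<notin> Y\<close> rho_other by simp
qed

lemma rho_Sinf: assumes h: "h \<in> IX X" shows "rho k X Y h \<in> Sinf Y"
proof -
  have "bij_betw (rho k X Y h) Y Y"
  proof (rule bij_betw_byWitness[where f' = "rho k X Y (pinv h)"])
    show "\<forall>a\<in>Y. rho k X Y (pinv h) (rho k X Y h a) = a" using rho_inv[OF h] by blast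
    show "\<forall>a\<in>Y. rho k X Y h (rho k X Y (pinv h) a) = a"
      using rho_inv[OF pinv_IX[OF h]] pinv_pinv[OF h] by metis
    show "rho k X Y h ` Y \<subseteq> Y" using rho_Y[OF h] by blast
    show "rho k X Y (pinv h) ` Y \<subseteq> Y" using rho_Y[OF pinv_IX[OF h]] by blast
  qed
  then show ?thesis using rho_ext by (simp add: Sinf_def)
qed

lemma hat_rho: assumes h: "h \<in> IX X" shows "hat X (rho k X Y h) = h"
proof
  fix x show "hat X (rho k X Y h) x = h x"
  proof (cases "x \<in> X")
    case True
    then show ?thesis
    proof (cases "h x")
      case None then show ?thesis using True rho_X_None k_notX by (simp add: hat_def)
    next
      case (Some b) then show ?thesis using True rho_X_Some IX_ran[OF h Some] by (simp add: hat_def)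
    qed
  next
    case False
    then have "h x = None" using IX_dom[OF h] by (cases "h x") auto
    then show ?thesis using False by (simp add: hat_def)
  qed
qed

end

lemma loc_const_discrete:
  assumes "\<And>h. h \<in> topspace A \<Longrightarrow> g h \<in> Y"
    and "\<And>h. h \<in> topspace A \<Longrightarrow> \<exists>N. openin A N \<and> h \<in> N \<and> (\<forall>h'\<in>N. g h' = g h)"
  shows "continuous_map A (discrete_topology Y) g"
  unfolding continuous_map_def
proof (intro conjI allI impI)
  show "g \<in> topspace A \<rightarrow> topspace (discrete_topology Y)" using assms(1) by auto
  fix U assume "openin (discrete_topology Y) U"
  show "openin A {x \<in> topspace A. g x \<in> U}"
  proof (subst openin_subopen, intro ballI)
    fix h assume hU: "h \<in> {x \<in> topspace A. g x \<in> U}"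
    then obtain N where N: "openin A N" "h \<in> N" "\<forall>h'\<in>N. g h' = g h" using assms(2) by blast
    have "N \<subseteq> {x \<in> topspace A. g x \<in> U}"
    proof
      fix h' assume h': "h' \<in> N"
      have "g h' = g h" using N(3) h' by (rule bspec)
      moreover have "g h \<in> U" using hU by simp
      moreover have "h' \<in> topspace A" using openin_subset[OF N(1)] h' by blast
      ultimately show "h' \<in> {x \<in> topspace A. g x \<in> U}" by simp
    qed
    then show "\<exists>T. openin A T \<and> h \<in> T \<and> T \<subseteq> {x \<in> topspace A. g x \<in> U}" using N by blast
  qed
qed

context kset begin

lemma cont_rho: "continuous_map (tau_pp X) (Sinf_top Y) (rho k X Y)"
  unfolding Sinf_top_def
proof (rule continuous_map_into_subtopology)
  show "rho k X Y \<in> topspace (tau_pp X) \<rightarrow> Sinf Y" using rho_Sinf by (auto simp: topspace_tau)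
  show "continuous_map (tau_pp X) (product_topology (\<lambda>_. discrete_topology Y) Y) (rho k X Y)"
    unfolding continuous_map_componentwise
  proof (intro conjI ballI)
    show "rho k X Y ` topspace (tau_pp X) \<subseteq> extensional Y" using rho_ext by auto
    fix a assume a: "a \<in> Y"
    show "continuous_map (tau_pp X) (discrete_topology Y) (\<lambda>h. rho k X Y h a)"
    proof (rule loc_const_discrete)
      fix h assume h: "h \<in> topspace (tau_pp X)"
      then have h: "h \<in> IX X" by (simp add: topspace_tau)
      show "rho k X Y h a \<in> Y" using rho_Y[OF h a] .
      show "\<exists>N. openin (tau_pp X) N \<and> h \<in> N \<and> (\<forall>h'\<in>N. rho k X Y h' a = rho k X Y h a)"
      proof (cases "a \<in> X")
        case True
        show ?thesis
        proof (cases "h a")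
          case None
          show ?thesis
            apply (rule exI[of _ "w1set X a"])
            using True None h open_w1[OF True] rho_X_None by (auto simp: w1set_def domIff)
        next
          case (Some b)
          have b: "b \<in> X" using IX_ran[OF h Some] .
          show ?thesis
            apply (rule exI[of _ "vset X a b"])
            using True Some h open_v[OF True b] rho_X_Some by (auto simp: vset_def)
        qed
      next
        case False
        show ?thesis
        proof (cases "a \<in> k ` X")
          case True
          then obtain y where y: "y \<in> X" "a = k y" by auto
          show ?thesis
          proof (cases "pinv h y")
            case None
            then have "y \<notin> ran h" by (simp add: pinv_None)
            show ?thesis
              apply (rule exI[of _ "w2set X y"])
              using y None h open_w2[OF y(1)] rho_k_None \<open>y \<notin> ran h\<close> by (auto simp: w2set_def pinv_None)
          next
            case (Some x)
            have hx: "h x = Some y" using pinv_Some[OF h] Some by simp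
            have x: "x \<in> X" using IX_dom[OF h hx] .
            have "\<forall>h'\<in>vset X x y. rho k X Y h' a = k x"
            proof
              fix h' assume "h' \<in> vset X x y"
              then have "h' \<in> IX X" "h' x = Some y" by (auto simp: vset_def)
              then have "pinv h' y = Some x" using pinv_Some by metis
              then show "rho k X Y h' a = k x" using y rho_k_Some by simp
            qed
            then show ?thesis
              using y Some h hx open_v[OF x y(1)] rho_k_Some by (auto simp: vset_def)
          qed
        next
          case False2: False
          show ?thesis
            apply (rule exI[of _ "IX X"])
            using False False2 h open_IX rho_other by auto
        qed
      qed
    qed
  qed
qed

end



theorem theorem6p3:
  fixes X Y :: "'a set"
  assumes "X \<subseteq> Y"
    and "\<exists>h. inj_on h X \<and> h ` X \<subseteq> Y - X"
  shows "\<forall>T :: ('a \<Rightarrow> 'a option) topology.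
           (Hausdorff_space T \<and> top_inverse_semigroup_IX X T \<and>
            continuous_map (Sinf_top Y) T (hat X))
           \<longleftrightarrow> T = tau_pp X"
proof (intro allI iffI)
  fix T :: "('a \<Rightarrow> 'a option) topology"
  assume A: "Hausdorff_space T \<and> top_inverse_semigroup_IX X T \<and> continuous_map (Sinf_top Y) T (hat X)"
  then have H: "Hausdorff_space T" and TI: "top_inverse_semigroup_IX X T"
    and hc: "continuous_map (Sinf_top Y) T (hat X)" by auto
  obtain k where k: "inj_on k X" "k ` X \<subseteq> Y - X" using assms(2) by blast
  interpret kset k X Y using assms(1) k by unfold_locales
  have ts: "topspace T = IX X" using TI by (simp add: top_inverse_semigroup_IX_def)
  have c1: "continuous_map T (tau_pp X) (\<lambda>f. f)" by (rule tau_le_T[OF H TI])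
  have "continuous_map (tau_pp X) T (hat X \<circ> rho k X Y)"
    by (rule continuous_map_compose[OF cont_rho hc])
  then have c2: "continuous_map (tau_pp X) T (\<lambda>f. f)"
    by (rule continuous_map_eq) (simp add: topspace_tau hat_rho)
  show "T = tau_pp X" unfolding topology_eq
  proof (intro allI iffI)
    fix S assume S: "openin T S"
    have "openin (tau_pp X) {x \<in> topspace (tau_pp X). x \<in> S}"
      by (rule openin_continuous_map_preimage[OF c2 S])
    moreover have "{x \<in> topspace (tau_pp X). x \<in> S} = S"
      using openin_subset[OF S] ts topspace_tau[of X] by auto
    ultimately show "openin (tau_pp X) S" by simp
  next
    fix S assume S: "openin (tau_pp X) S"
    have "openin T {x \<in> topspace T. x \<in> S}"
      by (rule openin_continuous_map_preimage[OF c1 S])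
    moreover have "{x \<in> topspace T. x \<in> S} = S"
      using openin_subset[OF S] ts topspace_tau[of X] by auto
    ultimately show "openin T S" by simp
  qed
next
  fix T :: "('a \<Rightarrow> 'a option) topology"
  assume "T = tau_pp X"
  then show "Hausdorff_space T \<and> top_inverse_semigroup_IX X T \<and> continuous_map (Sinf_top Y) T (hat X)"
    using haus_tau[of X] cont_mult[of X] cont_pinv[of X] cont_hat[OF assms(1)] topspace_tau[of X]
    by (simp add: top_inverse_semigroup_IX_def)
qed


end
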